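(* Let $T$ be a binary search tree in the cursor model and consider any sequence of operations on $T$ consisting of $M$ cursor moves and $R$ rotations. Then there is a binary search tree $T'$, whose keys are those of $T$ together with two extra keys $\min$ and $\max$ (respectively smaller and larger than all keys of $T$), and a restricted sequence of operations on $T'$ consisting of $4M+3R$ cursor moves and $2M+R$ rotations, which simulates the sequence on $T$, i.e., the sequence of nodes visited by the cursor of $T$ is a subsequence of the sequence of nodes visited by the cursor of $T'$.
   Context: Cursor model of binary search trees: besides the tree there is a cursor located at a node (initially the root). The allowed operations are: compare the key at the cursor with the searched value; move the cursor to an adjacent node (left child, right child or parent); rotate the node at the cursor upwards (a single rotation, which makes the node the parent of its former parent while preserving the in-order key order). A sequence of operations on a tree is called restricted if (i) every node visited by the cursor or involved in a rotation has depth less than $3$ (depth = distance to the root, the root having depth $0$), and (ii) after every rotation the cursor moves back to the root. *)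

theory Defs
  imports "HOL-Library.Tree" "HOL-Library.Extended" "HOL-Library.Sublist"
begin

datatype dir = DL | DR

datatype cop = MoveLeft | MoveRight | MoveUp | RotateUp

type_synonym 'a cstate = "'a tree \<times> dir list"

fun subtree_at :: "'a tree \<Rightarrow> dir list \<Rightarrow> 'a tree" where
  "subtree_at t [] = t"
| "subtree_at Leaf (d # p) = Leaf"
| "subtree_at (Node l x r) (DL # p) = subtree_at l p"
| "subtree_at (Node l x r) (DR # p) = subtree_at r p"

fun replace_at :: "'a tree \<Rightarrow> dir list \<Rightarrow> 'a tree \<Rightarrow> 'a tree" where
  "replace_at t [] s = s"
| "replace_at Leaf (d # p) s = Leaf"
| "replace_at (Node l x r) (DL # p) s = Node (replace_at l p s) x r"
| "replace_at (Node l x r) (DR # p) s = Node l x (replace_at r p s)"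

fun rotate_child :: "dir \<Rightarrow> 'a tree \<Rightarrow> 'a tree option" where
  "rotate_child DL (Node (Node a x b) y c) = Some (Node a x (Node b y c))"
| "rotate_child DR (Node a y (Node b x c)) = Some (Node (Node a y b) x c)"
| "rotate_child _ _ = None"

fun step :: "cop \<Rightarrow> 'a cstate \<Rightarrow> 'a cstate option" where
  "step MoveLeft (t, p) =
     (if subtree_at t (p @ [DL]) \<noteq> Leaf then Some (t, p @ [DL]) else None)"
| "step MoveRight (t, p) =
     (if subtree_at t (p @ [DR]) \<noteq> Leaf then Some (t, p @ [DR]) else None)"
| "step MoveUp (t, p) = (if p = [] then None else Some (t, butlast p))"
| "step RotateUp (t, p) =
     (if p = [] then None else
        (case rotate_child (last p) (subtree_at t (butlast p)) of
           None \<Rightarrow> None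
         | Some s \<Rightarrow> Some (replace_at t (butlast p) s, butlast p)))"

text \<open>Running a sequence of operations: the list of all states, starting
with the initial one (length = number of operations + 1).\<close>
fun run :: "cop list \<Rightarrow> 'a cstate \<Rightarrow> 'a cstate list option" where
  "run [] s = Some [s]"
| "run (c # cs) s =
     (case step c s of
        None \<Rightarrow> None
      | Some s' \<Rightarrow> map_option (Cons s) (run cs s'))"

text \<open>The node (identified by its key) at the cursor.\<close>
definition cursor_key :: "'a cstate \<Rightarrow> 'a" where
  "cursor_key s = value (subtree_at (fst s) (snd s))"

definition visited :: "'a cstate list \<Rightarrow> 'a list" where
  "visited ss = map cursor_key ss"

definition num_moves :: "cop list \<Rightarrow> nat" where
  "num_moves cs = length (filter (\<lambda>c. c \<in> {MoveLeft, MoveRight, MoveUp}) cs)"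

definition num_rots :: "cop list \<Rightarrow> nat" where
  "num_rots cs = length (filter (\<lambda>c. c = RotateUp) cs)"

text \<open>Restricted sequence (with its list of states ss, ss!i being the state
before operation i): (i) every node visited by the cursor has depth < 3, and
every node involved in a rotation (rotated node and its parent) has depth < 3;
(ii) after every rotation the cursor moves back to the root, i.e. the
operations immediately following it are upward moves until the root is
reached.\<close>
definition restricted :: "cop list \<Rightarrow> 'a cstate list \<Rightarrow> bool" where
  "restricted cs ss \<longleftrightarrow>
     (\<forall>s \<in> set ss. length (snd s) < 3) \<and>
     (\<forall>i < length cs. cs ! i = RotateUp \<longrightarrow>
        length (snd (ss ! i)) < 3 \<and> length (snd (ss ! i)) - 1 < 3) \<and>
     (\<forall>i < length cs. cs ! i = RotateUp \<longrightarrow>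
        (\<exists>j. i < j \<and> j \<le> length cs \<and> snd (ss ! j) = [] \<and>
             (\<forall>k. i < k \<and> k < j \<longrightarrow> cs ! k = MoveUp)))"

end

theory Submission
  imports Defs
begin

abbreviation mt :: "'a tree \<Rightarrow> 'a extended tree" where "mt \<equiv> map_tree Fin"

fun lcx :: "'a tree \<Rightarrow> ('a \<times> 'a tree) list \<Rightarrow> 'a extended tree" where
  "lcx L [] = Node Leaf Minf (mt L)"
| "lcx L ((z, Lz) # rest) = Node (lcx Lz rest) (Fin z) (mt L)"

fun rcx :: "'a tree \<Rightarrow> ('a \<times> 'a tree) list \<Rightarrow> 'a extended tree" where
  "rcx R [] = Node (mt R) Pinf Leaf"
| "rcx R ((w, Rw) # rest) = Node (mt R) (Fin w) (rcx Rw rest)"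

fun lt :: "('a \<times> 'a tree) list \<Rightarrow> 'a extended" where
  "lt [] = Minf" | "lt ((z, _) # _) = Fin z"
fun lr :: "('a \<times> 'a tree) list \<Rightarrow> 'a extended tree" where
  "lr [] = Leaf" | "lr ((z, Lz) # rest) = lcx Lz rest"
fun rt :: "('a \<times> 'a tree) list \<Rightarrow> 'a extended" where
  "rt [] = Pinf" | "rt ((z, _) # _) = Fin z"
fun rr :: "('a \<times> 'a tree) list \<Rightarrow> 'a extended tree" where
  "rr [] = Leaf" | "rr ((z, Rz) # rest) = rcx Rz rest"

lemma lcx_eq: "lcx L lst = Node (lr lst) (lt lst) (mt L)"
  by (cases lst) auto
lemma rcx_eq: "rcx R rst = Node (mt R) (rt rst) (rr rst)"
  by (cases rst) auto

fun cl :: "'a tree \<Rightarrow> dir list \<Rightarrow> ('a \<times> 'a tree) list \<Rightarrow> ('a \<times> 'a tree) list" where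
  "cl t [] acc = acc"
| "cl Leaf (d # p) acc = acc"
| "cl (Node l x r) (DL # p) acc = cl l p acc"
| "cl (Node l x r) (DR # p) acc = cl r p ((x, l) # acc)"

fun cr :: "'a tree \<Rightarrow> dir list \<Rightarrow> ('a \<times> 'a tree) list \<Rightarrow> ('a \<times> 'a tree) list" where
  "cr t [] acc = acc"
| "cr Leaf (d # p) acc = acc"
| "cr (Node l x r) (DL # p) acc = cr l p ((x, r) # acc)"
| "cr (Node l x r) (DR # p) acc = cr r p acc"

definition conv :: "'a tree \<Rightarrow> dir list \<Rightarrow> 'a extended tree" where
  "conv t p = (case subtree_at t p of Leaf \<Rightarrow> Leaf
     | Node L x R \<Rightarrow> Node (lcx L (cl t p [])) (Fin x) (rcx R (cr t p [])))"

lemma subtree_at_Leaf[simp]: "subtree_at Leaf q = Leaf"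
  by (metis list.exhaust subtree_at.simps(1) subtree_at.simps(2))

lemma subtree_at_append: "subtree_at t (p @ q) = subtree_at (subtree_at t p) q"
  by (induction t p rule: subtree_at.induct) auto

lemma cl_snoc:
  "subtree_at t p = Node L x R \<Longrightarrow>
     cl t (p @ [DL]) acc = cl t p acc \<and> cr t (p @ [DL]) acc = (x, R) # cr t p acc \<and>
     cl t (p @ [DR]) acc = (x, L) # cl t p acc \<and> cr t (p @ [DR]) acc = cr t p acc"
  by (induction t p arbitrary: acc rule: subtree_at.induct) auto

lemma cl_replace: "cl (replace_at t q s) q acc = cl t q acc \<and> cr (replace_at t q s) q acc = cr t q acc"
  by (induction t q arbitrary: acc rule: subtree_at.induct) auto

lemma subtree_replace: "subtree_at t q \<noteq> Leaf \<Longrightarrow> subtree_at (replace_at t q s) q = s"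
  by (induction t q rule: subtree_at.induct) auto

fun loc :: "cop list \<Rightarrow> 'a cstate list \<Rightarrow> bool" where
  "loc [] [s] = (length (snd s) < 3)"
| "loc (c # cs) (s # ss) = (length (snd s) < 3 \<and> ss \<noteq> [] \<and>
     (c = RotateUp \<longrightarrow> (snd (hd ss) = [] \<or>
        (cs \<noteq> [] \<and> hd cs = MoveUp \<and> tl ss \<noteq> [] \<and> snd (hd (tl ss)) = []))) \<and> loc cs ss)"
| "loc _ _ = False"

lemma loc_len: "loc cs ss \<Longrightarrow> length ss = Suc (length cs)"
  by (induction cs ss rule: loc.induct) auto

lemma loc_restricted: "loc cs ss \<Longrightarrow> restricted cs ss"
proof (induction cs ss rule: loc.induct)
  case (1 s)
  then show ?case by (simp add: restricted_def)
next
  case (2 c cs s ss)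
  then have IH: "restricted cs ss" and L: "length ss = Suc (length cs)" using loc_len by auto
  have all: "\<forall>s\<in>set (s # ss). length (snd s) < 3" using 2 IH by (auto simp: restricted_def)
  have p2: "\<forall>i < length (c # cs). (c # cs) ! i = RotateUp \<longrightarrow>
     length (snd ((s # ss) ! i)) < 3 \<and> length (snd ((s # ss) ! i)) - 1 < 3"
    using all L by (metis length_Cons less_Suc_eq less_imp_diff_less nth_mem)
  have p3: "\<forall>i < length (c # cs). (c # cs) ! i = RotateUp \<longrightarrow>
     (\<exists>j>i. j \<le> length (c # cs) \<and> snd ((s # ss) ! j) = [] \<and>
           (\<forall>k. i < k \<and> k < j \<longrightarrow> (c # cs) ! k = MoveUp))"
  proof (intro allI impI)
    fix i assume i: "i < length (c # cs)" "(c # cs) ! i = RotateUp"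
    show "\<exists>j>i. j \<le> length (c # cs) \<and> snd ((s # ss) ! j) = [] \<and>
           (\<forall>k. i < k \<and> k < j \<longrightarrow> (c # cs) ! k = MoveUp)"
    proof (cases i)
      case 0
      then have "c = RotateUp" using i by simp
      then have "snd (hd ss) = [] \<or> (cs \<noteq> [] \<and> hd cs = MoveUp \<and> tl ss \<noteq> [] \<and> snd (hd (tl ss)) = [])"
        using 2 by simp
      then show ?thesis
      proof
        assume "snd (hd ss) = []"
        then show ?thesis using 0 2 by (intro exI[of _ 1]) (auto simp: hd_conv_nth)
      next
        assume h: "cs \<noteq> [] \<and> hd cs = MoveUp \<and> tl ss \<noteq> [] \<and> snd (hd (tl ss)) = []"
        have "snd (ss ! 1) = []" using h by (cases ss) (auto simp: hd_conv_nth)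
        have "cs ! 0 = MoveUp" "length cs \<ge> 1" using h by (cases cs; simp)+
        have a1: "2 \<le> length (c#cs)" using \<open>length cs \<ge> 1\<close> by simp
        have a2: "snd ((s#ss)!2) = []" using \<open>snd (ss!1) = []\<close> by (simp add: numeral_2_eq_2)
        have a3: "\<forall>k. i<k \<and> k<2 \<longrightarrow> (c#cs)!k = MoveUp"
        proof (intro allI impI)
          fix k assume "i < k \<and> k < 2"
          then have "k = 1" using 0 by linarith
          then show "(c#cs)!k = MoveUp" using \<open>cs ! 0 = MoveUp\<close> by simp
        qed
        show ?thesis using 0 a1 a2 a3 by (intro exI[of _ 2]) simp
      qed
    next
      case (Suc i')
      then have "i' < length cs" "cs ! i' = RotateUp" using i by auto
      then obtain j where "i' < j" "j \<le> length cs" "snd (ss ! j) = []"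
        "\<forall>k. i' < k \<and> k < j \<longrightarrow> cs ! k = MoveUp"
        using IH unfolding restricted_def by blast
      note jj = this
      have b: "\<forall>k. i < k \<and> k < Suc j \<longrightarrow> (c#cs)!k = MoveUp"
      proof (intro allI impI)
        fix k assume k: "i < k \<and> k < Suc j"
        then obtain k' where "k = Suc k'" using Suc by (cases k) auto
        then show "(c#cs)!k = MoveUp" using jj(4) k Suc by simp
      qed
      show ?thesis using Suc jj(1-3) b by (intro exI[of _ "Suc j"]) simp
    qed
  qed
  show ?case using all p2 p3 by (simp add: restricted_def)
qed auto

lemma loc_ne: "loc cs ss \<Longrightarrow> ss \<noteq> []"
  by (cases "(cs, ss)" rule: loc.cases) auto

lemma loc_append: "loc cs1 ss1 \<Longrightarrow> loc cs2 ss2 \<Longrightarrow> last ss1 = hd ss2 \<Longrightarrow>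
  loc (cs1 @ cs2) (ss1 @ tl ss2)"
proof (induction cs1 ss1 rule: loc.induct)
  case (1 s)
  then show ?case using loc_ne[of cs2 ss2] by (cases ss2) auto
next
  case (2 c cs s ss)
  then have IH: "loc (cs @ cs2) (ss @ tl ss2)" by auto
  have ne: "ss \<noteq> []" using 2 by simp
  show ?case using 2(2) IH ne by (cases ss; cases cs; auto)
qed auto

lemma run_hd: "run cs s = Some ss \<Longrightarrow> ss \<noteq> [] \<and> hd ss = s"
  by (induction cs arbitrary: s ss) (auto split: option.splits)

lemma run_append: "run cs1 s = Some ss1 \<Longrightarrow> run cs2 (last ss1) = Some ss2 \<Longrightarrow>
  run (cs1 @ cs2) s = Some (ss1 @ tl ss2)"
proof (induction cs1 arbitrary: s ss1)
  case Nil
  then show ?case using run_hd[of cs2 s ss2] by (cases ss2) auto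
next
  case (Cons c cs)
  then obtain s' ss1' where "step c s = Some s'" "run cs s' = Some ss1'" "ss1 = s # ss1'"
    by (auto split: option.splits)
  moreover have "ss1' \<noteq> []" using run_hd calculation by blast
  ultimately show ?case using Cons by auto
qed

lemma blkML: "\<exists>ss. run [MoveLeft, MoveRight, RotateUp, MoveUp, MoveLeft, RotateUp]
   (Node (Node C z (Node A l B)) x Y, []) = Some ss \<and> loc [MoveLeft, MoveRight, RotateUp, MoveUp, MoveLeft, RotateUp] ss \<and>
   last ss = (Node (Node C z A) l (Node B x Y), [])"
  by simp

lemma blkMR: "\<exists>ss. run [MoveRight, MoveLeft, RotateUp, MoveUp, MoveRight, RotateUp]
   (Node Y x (Node (Node A r B) w E), []) = Some ss \<and> loc [MoveRight, MoveLeft, RotateUp, MoveUp, MoveRight, RotateUp] ss \<and>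
   last ss = (Node (Node Y x A) r (Node B w E), [])"
  by simp

lemma blkUL: "\<exists>ss. run [MoveRight, RotateUp, MoveLeft, MoveLeft, RotateUp, MoveUp]
   (Node (Node C z A) x (Node B y Q), []) = Some ss \<and> loc [MoveRight, RotateUp, MoveLeft, MoveLeft, RotateUp, MoveUp] ss \<and>
   last ss = (Node (Node C z (Node A x B)) y Q, [])"
  by simp

lemma blkUR: "\<exists>ss. run [MoveLeft, RotateUp, MoveRight, MoveRight, RotateUp, MoveUp]
   (Node (Node Q y A) x (Node B w E), []) = Some ss \<and> loc [MoveLeft, RotateUp, MoveRight, MoveRight, RotateUp, MoveUp] ss \<and>
   last ss = (Node Q y (Node (Node A x B) w E), [])"
  by simp

lemma blkRL: "\<exists>ss. run [MoveRight, MoveRight, RotateUp, MoveUp]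
   (Node P x (Node B y (Node D w E)), []) = Some ss \<and> loc [MoveRight, MoveRight, RotateUp, MoveUp] ss \<and>
   last ss = (Node P x (Node (Node B y D) w E), [])"
  by simp

lemma blkRR: "\<exists>ss. run [MoveLeft, MoveLeft, RotateUp, MoveUp]
   (Node (Node (Node C z D) y A) x P, []) = Some ss \<and> loc [MoveLeft, MoveLeft, RotateUp, MoveUp] ss \<and>
   last ss = (Node (Node C z (Node D y A)) x P, [])"
  by simp

lemma sub_nonleaf: "subtree_at t (q @ [d]) \<noteq> Leaf \<Longrightarrow> \<exists>L y R. subtree_at t q = Node L y R"
  by (cases "subtree_at t q") (auto simp: subtree_at_append)

lemma snoc_cases: "p \<noteq> [] \<Longrightarrow> p = butlast p @ [last p]"
  by simp

lemma pack: "\<exists>ss. run b X = Some ss \<and> loc b ss \<and> last ss = Y \<Longrightarrow> b \<noteq> [] \<Longrightarrow>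
  \<exists>b' bs. run b' X = Some bs \<and> loc b' bs \<and> last bs = Y \<and> b' \<noteq> [] \<and>
     num_moves b' = num_moves b \<and> num_rots b' = num_rots b"
  by blast

lemma sim_step:
  assumes ne: "subtree_at t p \<noteq> Leaf" and st: "step c (t, p) = Some (t', p')"
  shows "subtree_at t' p' \<noteq> Leaf \<and> (\<exists>b bs. run b (conv t p, []) = Some bs \<and> loc b bs \<and>
     last bs = (conv t' p', []) \<and> b \<noteq> [] \<and>
     num_moves b = (if c = RotateUp then 3 else 4) \<and> num_rots b = (if c = RotateUp then 1 else 2))"
proof -
  obtain L x R where sp: "subtree_at t p = Node L x R" using ne by (cases "subtree_at t p") auto
  show ?thesis
  proof (cases c)
    case MoveLeft
    then have eq: "t' = t" "p' = p @ [DL]" and nl: "subtree_at t (p @ [DL]) \<noteq> Leaf"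
      using st by (auto split: if_splits)
    then obtain A l B where L: "L = Node A l B" using sp by (cases L) (auto simp: subtree_at_append)
    define lst where "lst = cl t p []"
    define rst where "rst = cr t p []"
    have e1: "conv t p = Node (Node (lr lst) (lt lst) (Node (mt A) (Fin l) (mt B))) (Fin x) (rcx R rst)"
      using sp L by (simp add: conv_def lcx_eq lst_def rst_def)
    have e2: "conv t' p' = Node (Node (lr lst) (lt lst) (mt A)) (Fin l) (Node (mt B) (Fin x) (rcx R rst))"
      using sp L eq cl_snoc[OF sp] by (simp add: conv_def lcx_eq lst_def rst_def subtree_at_append)
    have X: "\<exists>ss. run [MoveLeft, MoveRight, RotateUp, MoveUp, MoveLeft, RotateUp] (conv t p, []) = Some ss \<and> loc [MoveLeft, MoveRight, RotateUp, MoveUp, MoveLeft, RotateUp] ss \<and> last ss = (conv t' p', [])"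
        unfolding e1 e2 by (rule blkML)
      show ?thesis using pack[OF X] nl eq MoveLeft
        by (simp add: num_moves_def num_rots_def eval_nat_numeral)
  next
    case MoveRight
    then have eq: "t' = t" "p' = p @ [DR]" and nl: "subtree_at t (p @ [DR]) \<noteq> Leaf"
      using st by (auto split: if_splits)
    then obtain A r B where R: "R = Node A r B" using sp by (cases R) (auto simp: subtree_at_append)
    define lst where "lst = cl t p []"
    define rst where "rst = cr t p []"
    have e1: "conv t p = Node (lcx L lst) (Fin x) (Node (Node (mt A) (Fin r) (mt B)) (rt rst) (rr rst))"
      using sp R by (simp add: conv_def rcx_eq lst_def rst_def)
    have e2: "conv t' p' = Node (Node (lcx L lst) (Fin x) (mt A)) (Fin r) (Node (mt B) (rt rst) (rr rst))"
      using sp R eq cl_snoc[OF sp] by (simp add: conv_def rcx_eq lst_def rst_def subtree_at_append)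
    have X: "\<exists>ss. run [MoveRight, MoveLeft, RotateUp, MoveUp, MoveRight, RotateUp] (conv t p, []) = Some ss \<and> loc [MoveRight, MoveLeft, RotateUp, MoveUp, MoveRight, RotateUp] ss \<and> last ss = (conv t' p', [])"
        unfolding e1 e2 by (rule blkMR)
      show ?thesis using pack[OF X] nl eq MoveRight
        by (simp add: num_moves_def num_rots_def eval_nat_numeral)
  next
    case MoveUp
    then have pne: "p \<noteq> []" and eq: "t' = t" "p' = butlast p" using st by (auto split: if_splits)
    define q where "q = butlast p"
    define d where "d = last p"
    have pq: "p = q @ [d]" using pne by (simp add: q_def d_def)
    obtain L0 y R0 where sq: "subtree_at t q = Node L0 y R0" using sub_nonleaf ne pq by blast
    define lst where "lst = cl t q []"
    define rst where "rst = cr t q []"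
    show ?thesis
    proof (cases d)
      case DL
      then have L0: "L0 = Node L x R" using sp sq pq by (simp add: subtree_at_append)
      have e1: "conv t p = Node (Node (lr lst) (lt lst) (mt L)) (Fin x) (Node (mt R) (Fin y) (rcx R0 rst))"
        using sp pq DL cl_snoc[OF sq] by (simp add: conv_def lcx_eq lst_def rst_def)
      have e2: "conv t' p' = Node (Node (lr lst) (lt lst) (Node (mt L) (Fin x) (mt R))) (Fin y) (rcx R0 rst)"
        using sq L0 eq q_def by (simp add: conv_def lcx_eq lst_def rst_def)
      have X: "\<exists>ss. run [MoveRight, RotateUp, MoveLeft, MoveLeft, RotateUp, MoveUp] (conv t p, []) = Some ss \<and> loc [MoveRight, RotateUp, MoveLeft, MoveLeft, RotateUp, MoveUp] ss \<and> last ss = (conv t' p', [])"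
        unfolding e1 e2 by (rule blkUL)
      show ?thesis using pack[OF X] eq sq q_def MoveUp
        by (simp add: num_moves_def num_rots_def eval_nat_numeral)
    next
      case DR
      then have R0: "R0 = Node L x R" using sp sq pq by (simp add: subtree_at_append)
      have e1: "conv t p = Node (Node (lcx L0 lst) (Fin y) (mt L)) (Fin x) (Node (mt R) (rt rst) (rr rst))"
        using sp pq DR cl_snoc[OF sq] by (simp add: conv_def rcx_eq lst_def rst_def)
      have e2: "conv t' p' = Node (lcx L0 lst) (Fin y) (Node (Node (mt L) (Fin x) (mt R)) (rt rst) (rr rst))"
        using sq R0 eq q_def by (simp add: conv_def rcx_eq lst_def rst_def)
      have X: "\<exists>ss. run [MoveLeft, RotateUp, MoveRight, MoveRight, RotateUp, MoveUp] (conv t p, []) = Some ss \<and> loc [MoveLeft, RotateUp, MoveRight, MoveRight, RotateUp, MoveUp] ss \<and> last ss = (conv t' p', [])"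
        unfolding e1 e2 by (rule blkUR)
      show ?thesis using pack[OF X] eq sq q_def MoveUp
        by (simp add: num_moves_def num_rots_def eval_nat_numeral)
    qed
  next
    case RotateUp
    then have pne: "p \<noteq> []" using st by (auto split: if_splits)
    define q where "q = butlast p"
    define d where "d = last p"
    have pq: "p = q @ [d]" using pne by (simp add: q_def d_def)
    have cs0: "(case rotate_child d (subtree_at t q) of None \<Rightarrow> None
         | Some s \<Rightarrow> Some (replace_at t q s, q)) = Some (t', p')"
      unfolding q_def d_def using st RotateUp pne by simp
    have "\<exists>s. rotate_child d (subtree_at t q) = Some s \<and> t' = replace_at t q s \<and> p' = q"
      using cs0 by (cases "rotate_child d (subtree_at t q)") auto
    then obtain s where rc: "rotate_child d (subtree_at t q) = Some s" and eq: "t' = replace_at t q s" "p' = q"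
      by blast
    obtain L0 y R0 where sq: "subtree_at t q = Node L0 y R0" using sub_nonleaf ne pq by blast
    have sr: "subtree_at t' q = s" unfolding eq(1) using subtree_replace[of t q s] sq by simp
    have clr: "cl t' q [] = cl t q []" "cr t' q [] = cr t q []" unfolding eq(1) using cl_replace by blast+
    define lst where "lst = cl t q []"
    define rst where "rst = cr t q []"
    show ?thesis
    proof (cases d)
      case DL
      then have L0: "L0 = Node L x R" using sp sq pq by (simp add: subtree_at_append)
      have s: "s = Node L x (Node R y R0)" using rc sq L0 DL by simp
      have e1: "conv t p = Node (lcx L lst) (Fin x) (Node (mt R) (Fin y) (Node (mt R0) (rt rst) (rr rst)))"
        using sp pq DL cl_snoc[OF sq] by (simp add: conv_def rcx_eq lst_def rst_def)
      have e2: "conv t' p' = Node (lcx L lst) (Fin x) (Node (Node (mt R) (Fin y) (mt R0)) (rt rst) (rr rst))"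
        using sr s clr eq by (simp add: conv_def rcx_eq lst_def rst_def)
      have X: "\<exists>ss. run [MoveRight, MoveRight, RotateUp, MoveUp] (conv t p, []) = Some ss \<and> loc [MoveRight, MoveRight, RotateUp, MoveUp] ss \<and> last ss = (conv t' p', [])"
        unfolding e1 e2 by (rule blkRL)
      show ?thesis using pack[OF X] eq sr s RotateUp
        by (simp add: num_moves_def num_rots_def eval_nat_numeral)
    next
      case DR
      then have R0: "R0 = Node L x R" using sp sq pq by (simp add: subtree_at_append)
      have s: "s = Node (Node L0 y L) x R" using rc sq R0 DR by simp
      have e1: "conv t p = Node (Node (Node (lr lst) (lt lst) (mt L0)) (Fin y) (mt L)) (Fin x) (rcx R rst)"
        using sp pq DR cl_snoc[OF sq] by (simp add: conv_def lcx_eq lst_def rst_def)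
      have e2: "conv t' p' = Node (Node (lr lst) (lt lst) (Node (mt L0) (Fin y) (mt L))) (Fin x) (rcx R rst)"
        using sr s clr eq by (simp add: conv_def lcx_eq lst_def rst_def)
      have X: "\<exists>ss. run [MoveLeft, MoveLeft, RotateUp, MoveUp] (conv t p, []) = Some ss \<and> loc [MoveLeft, MoveLeft, RotateUp, MoveUp] ss \<and> last ss = (conv t' p', [])"
        unfolding e1 e2 by (rule blkRR)
      show ?thesis using pack[OF X] eq sr s RotateUp
        by (simp add: num_moves_def num_rots_def eval_nat_numeral)
    qed
  qed
qed

lemma ck_conv: "subtree_at t p \<noteq> Leaf \<Longrightarrow> cursor_key (conv t p, []) = Fin (cursor_key (t, p))"
  by (cases "subtree_at t p") (auto simp: cursor_key_def conv_def)

lemma num_moves_append: "num_moves (a @ b) = num_moves a + num_moves b"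
  by (simp add: num_moves_def)
lemma num_rots_append: "num_rots (a @ b) = num_rots a + num_rots b"
  by (simp add: num_rots_def)

lemma sim: "subtree_at t p \<noteq> Leaf \<Longrightarrow> run cs (t, p) = Some ss \<Longrightarrow>
  \<exists>cs' ss'. run cs' (conv t p, []) = Some ss' \<and> loc cs' ss' \<and>
    num_moves cs' = 4 * num_moves cs + 3 * num_rots cs \<and>
    num_rots cs' = 2 * num_moves cs + num_rots cs \<and>
    subseq (map Fin (visited ss)) (visited ss')"
proof (induction cs arbitrary: t p ss)
  case Nil
  then show ?case
    by (intro exI[of _ "[]"] exI[of _ "[(conv t p, [])]"])
       (auto simp: visited_def ck_conv num_moves_def num_rots_def)
next
  case (Cons c cs)
  obtain t' p' ss0 where st: "step c (t, p) = Some (t', p')" and r0: "run cs (t', p') = Some ss0"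
    and ss: "ss = (t, p) # ss0"
    using Cons.prems by (auto split: option.splits)
  obtain b bs where ne': "subtree_at t' p' \<noteq> Leaf" and rb: "run b (conv t p, []) = Some bs"
    and lb: "loc b bs" and lastb: "last bs = (conv t' p', [])" and bne: "b \<noteq> []"
    and nm: "num_moves b = (if c = RotateUp then 3 else 4)"
    and nr: "num_rots b = (if c = RotateUp then 1 else 2)"
    using sim_step[OF Cons.prems(1) st] by blast
  obtain cs2 ss2 where r2: "run cs2 (conv t' p', []) = Some ss2" and l2: "loc cs2 ss2"
    and n2: "num_moves cs2 = 4 * num_moves cs + 3 * num_rots cs"
    "num_rots cs2 = 2 * num_moves cs + num_rots cs"
    and sub: "subseq (map Fin (visited ss0)) (visited ss2)"
    using Cons.IH[OF ne' r0] by blast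
  have h2: "ss2 \<noteq> []" "hd ss2 = (conv t' p', [])" using run_hd[OF r2] by auto
  have hb: "bs \<noteq> []" "hd bs = (conv t p, [])" using run_hd[OF rb] by auto
  have run': "run (b @ cs2) (conv t p, []) = Some (bs @ tl ss2)"
    using run_append[OF rb] r2 lastb by simp
  have loc': "loc (b @ cs2) (bs @ tl ss2)" using loc_append[OF lb l2] lastb h2 by simp
  have lenb: "length bs \<ge> 2" using loc_len[OF lb] bne by (cases b) auto
  define mid where "mid = butlast (tl bs)"
  have tlne: "tl bs \<noteq> []" using lenb by (cases bs) auto
  have bsd: "bs = (conv t p, []) # mid @ [(conv t' p', [])]"
  proof -
    have e1: "bs = hd bs # tl bs" using hb(1) by simp
    have e2: "tl bs = butlast (tl bs) @ [last (tl bs)]" using tlne by simp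
    have e3: "last (tl bs) = last bs" using tlne hb(1) by (simp add: last_tl)
    show ?thesis using e1 e2 e3 hb(2) lastb unfolding mid_def by simp
  qed
  have ss2d: "ss2 = (conv t' p', []) # tl ss2" using h2 by (cases ss2) auto
  have cat: "bs @ tl ss2 = (conv t p, []) # mid @ ss2"
    by (subst bsd, subst (2) ss2d) simp
  have vis: "visited (bs @ tl ss2) = Fin (cursor_key (t, p)) # (map cursor_key mid @ visited ss2)"
    unfolding cat visited_def using ck_conv[OF Cons.prems(1)] by simp
  have "subseq (map Fin (visited ss)) (visited (bs @ tl ss2))"
    unfolding vis using sub ss by (auto simp: visited_def)
  moreover have "num_moves (b @ cs2) = 4 * num_moves (c # cs) + 3 * num_rots (c # cs)"
    "num_rots (b @ cs2) = 2 * num_moves (c # cs) + num_rots (c # cs)"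
    using nm nr n2 by (cases c; simp add: num_moves_append num_rots_append num_moves_def num_rots_def)+
  ultimately show ?case using run' loc' by blast
qed

lemma set_mt: "set_tree (mt t) = Fin ` set_tree t"
  by (induction t) auto

lemma bst_mt: "bst t \<Longrightarrow> bst (mt t)"
  by (induction t) (auto simp: set_mt)

theorem lemma4p3:
  fixes T :: "'a::linorder tree" and cs :: "cop list" and ss :: "'a cstate list"
    and M R :: nat
  assumes "bst T" and "T \<noteq> Leaf"
    and "run cs (T, []) = Some ss"
    and "num_moves cs = M" and "num_rots cs = R"
  shows "\<exists>(T' :: 'a extended tree) cs' ss'.
           bst T' \<and> set_tree T' = Fin ` set_tree T \<union> {Minf, Pinf} \<and>
           run cs' (T', []) = Some ss' \<and> restricted cs' ss' \<and>
           num_moves cs' = 4 * M + 3 * R \<and> num_rots cs' = 2 * M + R \<and>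
           subseq (map Fin (visited ss)) (visited ss')"
proof -
  obtain L x R0 where T: "T = Node L x R0" using assms(2) by (cases T) auto
  have ne: "subtree_at T [] \<noteq> Leaf" using assms(2) by simp
  obtain cs' ss' where h: "run cs' (conv T [], []) = Some ss'" "loc cs' ss'"
    "num_moves cs' = 4 * num_moves cs + 3 * num_rots cs"
    "num_rots cs' = 2 * num_moves cs + num_rots cs"
    "subseq (map Fin (visited ss)) (visited ss')"
    using sim[OF ne assms(3)] by blast
  have cT: "conv T [] = Node (Node Leaf Minf (mt L)) (Fin x) (Node (mt R0) Pinf Leaf)"
    by (simp add: conv_def T)
  have bL: "bst L" "bst R0" "\<forall>a\<in>set_tree L. a < x" "\<forall>a\<in>set_tree R0. x < a"
    using assms(1) T by auto
  have "bst (conv T [])" using bL unfolding cT by (auto simp: set_mt bst_mt)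
  moreover have "set_tree (conv T []) = Fin ` set_tree T \<union> {Minf, Pinf}"
    unfolding cT by (auto simp: set_mt T)
  ultimately show ?thesis using h loc_restricted assms(4,5) by blast
qed

end
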